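(* For every $\eta,\varepsilon\in(0,1/3]$ (and $d\in\mathbb{N}$) there is $N=N(\eta,\varepsilon)\in\mathbb{N}$ such that the following holds for every integer $m'\ge0$ and all sufficiently small $\delta>0$. For every cube $Q\in\mathcal{D}_{m'}$ there exists a set $B\subset4Q$ with $|B|\le\eta|Q|$ such that $$\bigl|(a_0+Q)\cap(A+B)\bigr|\ge(1-\varepsilon)|Q|$$ for all sets $A\subset[0,2^{-m'}]^d$ with $|A|_\delta\ge N$ and all $a_0\in A$. Moreover, $B$ can be taken to be a union of closed dyadic cubes all of the same size, this size depending only on $d,\eta,\varepsilon,\delta,m'$.
   Context: $\mathcal{D}_{m'}$ is the family of closed dyadic cubes in $\mathbb{R}^d$ of side length $2^{-m'}$; for a cube $Q$, $4Q$ is the cube with the same centre and four times the side length. $|E|_\delta$ is the smallest number of balls of radius $\delta$ covering $E$; $|B|,|Q|$ denote Lebesgue measure. *)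

theory Defs
  imports "HOL-Analysis.Analysis"
begin

definition dyadic_cube :: "int \<Rightarrow> 'a::euclidean_space \<Rightarrow> 'a set" where
  "dyadic_cube k v = cbox ((2 powr (- real_of_int k)) *\<^sub>R v)
                          ((2 powr (- real_of_int k)) *\<^sub>R (v + One))"

definition int_lattice :: "'a::euclidean_space set" where
  "int_lattice = {v. \<forall>i\<in>Basis. v \<bullet> i \<in> \<int>}"

definition dyadic_cubes :: "int \<Rightarrow> 'a::euclidean_space set set" where
  "dyadic_cubes k = {dyadic_cube k v | v. v \<in> int_lattice}"

text \<open>4Q for Q = dyadic_cube k v: same centre, four times the side length.\<close>
definition dyadic_cube4 :: "int \<Rightarrow> 'a::euclidean_space \<Rightarrow> 'a set" where
  "dyadic_cube4 k v = cbox ((2 powr (- real_of_int k)) *\<^sub>R (v - (3/2) *\<^sub>R One))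
                           ((2 powr (- real_of_int k)) *\<^sub>R (v + (5/2) *\<^sub>R One))"

definition covering_number :: "real \<Rightarrow> 'a::euclidean_space set \<Rightarrow> nat" where
  "covering_number \<delta> E =
     Inf {n. \<exists>C. finite C \<and> card C = n \<and> E \<subseteq> (\<Union>c\<in>C. cball c \<delta>)}"

definition set_plus :: "'a::euclidean_space set \<Rightarrow> 'a set \<Rightarrow> 'a set" where
  "set_plus A B = {a + b | a b. a \<in> A \<and> b \<in> B}"

abbreviation lmeas :: "'a::euclidean_space set \<Rightarrow> ennreal" where
  "lmeas E \<equiv> outer_measure_of lebesgue E"

end

theory Submission
  imports Defs "HOL-Real_Asymp.Real_Asymp"
begin

definition fl :: "'a::euclidean_space \<Rightarrow> 'a" where
  "fl x = (\<Sum>b\<in>Basis. of_int \<lfloor>x\<bullet>b\<rfloor> *\<^sub>R b)"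

lemma fl_inner: "b \<in> Basis \<Longrightarrow> fl x \<bullet> b = of_int \<lfloor>x\<bullet>b\<rfloor>"
  by (simp add: fl_def inner_sum_left inner_Basis if_distrib cong: if_cong)

lemma fl_lattice: "fl x \<in> int_lattice"
  by (simp add: int_lattice_def fl_inner)

lemma lattice_add: "p \<in> int_lattice \<Longrightarrow> q \<in> int_lattice \<Longrightarrow> p + q \<in> int_lattice"
  by (auto simp: int_lattice_def inner_add_left)

lemma lattice_diff: "p \<in> int_lattice \<Longrightarrow> q \<in> int_lattice \<Longrightarrow> p - q \<in> int_lattice"
  by (auto simp: int_lattice_def inner_diff_left)

lemma lattice_scale: "p \<in> int_lattice \<Longrightarrow> (of_int m::real) *\<^sub>R p \<in> int_lattice"
  by (auto simp: int_lattice_def)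

lemma lattice_fl: "p \<in> int_lattice \<Longrightarrow> fl p = p"
  by (rule euclidean_eqI) (auto simp: int_lattice_def fl_inner elim!: Ints_cases)

definition lat_box :: "real \<Rightarrow> real \<Rightarrow> 'a::euclidean_space set" where
  "lat_box lo hi = {p\<in>int_lattice. \<forall>b\<in>Basis. lo \<le> p\<bullet>b \<and> p\<bullet>b \<le> hi}"

lemma lat_box_card:
  "finite (lat_box lo hi :: 'a::euclidean_space set) \<and>
   card (lat_box lo hi :: 'a set) \<le> nat (\<lfloor>hi\<rfloor> - \<lceil>lo\<rceil> + 1) ^ DIM('a)"
proof -
  define g where "g p = restrict (\<lambda>b. \<lfloor>p\<bullet>b\<rfloor>) Basis" for p :: 'a
  have inj: "inj_on g (lat_box lo hi)"
  proof
    fix p q assume p: "p \<in> lat_box lo hi" and q: "q \<in> lat_box lo hi" and e: "g p = g q"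
    show "p = q"
    proof (rule euclidean_eqI)
      fix b :: 'a assume b: "b \<in> Basis"
      have "\<lfloor>p\<bullet>b\<rfloor> = \<lfloor>q\<bullet>b\<rfloor>" using e b unfolding g_def restrict_def by meson
      moreover have "p\<bullet>b \<in> \<int>" "q\<bullet>b \<in> \<int>" using p q b by (auto simp: lat_box_def int_lattice_def)
      ultimately show "p\<bullet>b = q\<bullet>b" by (auto elim!: Ints_cases)
    qed
  qed
  have sub: "g ` lat_box lo hi \<subseteq> PiE Basis (\<lambda>_. {\<lceil>lo\<rceil>..\<lfloor>hi\<rfloor>})"
  proof
    fix y assume "y \<in> g ` lat_box lo hi"
    then obtain p where p: "p \<in> lat_box lo hi" "y = g p" by auto
    have "\<lfloor>p\<bullet>b\<rfloor> \<in> {\<lceil>lo\<rceil>..\<lfloor>hi\<rfloor>}" if b: "b \<in> Basis" for b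
    proof -
      obtain z where z: "p\<bullet>b = of_int z" using p b by (auto simp: lat_box_def int_lattice_def elim!: Ints_cases)
      have "lo \<le> of_int z" "of_int z \<le> hi" using p b z by (auto simp: lat_box_def)
      then show ?thesis using z by (simp add: ceiling_le le_floor_iff)
    qed
    then show "y \<in> PiE Basis (\<lambda>_. {\<lceil>lo\<rceil>..\<lfloor>hi\<rfloor>})" using p by (auto simp: g_def)
  qed
  have finPi: "finite (PiE Basis (\<lambda>_::'a. {\<lceil>lo\<rceil>..\<lfloor>hi\<rfloor>}))" by (simp add: finite_PiE)
  have fimg: "finite (g ` lat_box lo hi)" using finite_subset[OF sub finPi] .
  have fin: "finite (lat_box lo hi :: 'a set)" using finite_imageD[OF fimg inj] .
  have "card (lat_box lo hi :: 'a set) = card (g ` lat_box lo hi)" using inj by (simp add: card_image)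
  also have "\<dots> \<le> card (PiE Basis (\<lambda>_::'a. {\<lceil>lo\<rceil>..\<lfloor>hi\<rfloor>}))" by (rule card_mono[OF finPi sub])
  also have "\<dots> = nat (\<lfloor>hi\<rfloor> - \<lceil>lo\<rceil> + 1) ^ DIM('a)" by (simp add: card_PiE)
  finally show ?thesis using fin by simp
qed

lemma lmeas_cbox:
  fixes a c :: "'a::euclidean_space"
  assumes "\<And>b. b \<in> Basis \<Longrightarrow> a\<bullet>b \<le> c\<bullet>b"
  shows "lmeas (cbox a c) = ennreal (\<Prod>b\<in>Basis. (c - a)\<bullet>b)"
proof -
  have "cbox a c \<in> sets lebesgue" by simp
  then have "lmeas (cbox a c) = emeasure lebesgue (cbox a c)" by (rule outer_measure_of_eq)
  also have "\<dots> = emeasure lborel (cbox a c)" by simp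
  also have "\<dots> = ennreal (\<Prod>b\<in>Basis. (c - a)\<bullet>b)" using assms by (simp add: emeasure_lborel_cbox)
  finally show ?thesis .
qed

lemma lmeas_dyadic:
  "lmeas (dyadic_cube k v :: 'a::euclidean_space set) = ennreal ((2 powr (- real_of_int k)) ^ DIM('a))"
proof -
  define \<tau> :: real where "\<tau> = 2 powr (- real_of_int k)"
  have tp: "\<tau> > 0" by (simp add: \<tau>_def)
  have e: "\<tau> *\<^sub>R (v + One) - \<tau> *\<^sub>R v = \<tau> *\<^sub>R (One::'a)" by (simp add: scaleR_add_right)
  have "lmeas (dyadic_cube k v :: 'a set) = ennreal (\<Prod>b\<in>(Basis::'a set). (\<tau> *\<^sub>R (v + One) - \<tau> *\<^sub>R v) \<bullet> b)"
    unfolding dyadic_cube_def \<tau>_def[symmetric]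
  proof (rule lmeas_cbox)
    fix b :: 'a assume b: "b \<in> Basis"
    have "(\<tau> *\<^sub>R (v + One) - \<tau> *\<^sub>R v) \<bullet> b = \<tau>" using b by (simp only: e) simp
    then show "(\<tau> *\<^sub>R v) \<bullet> b \<le> (\<tau> *\<^sub>R (v + One)) \<bullet> b" using tp b by (simp add: inner_add_left)
  qed
  also have "\<dots> = ennreal (\<Prod>b\<in>(Basis::'a set). \<tau>)"
    by (intro arg_cong[where f=ennreal] prod.cong refl) (simp only: e, simp)
  finally have "lmeas (dyadic_cube k v :: 'a set) = ennreal (\<Prod>b\<in>(Basis::'a set). \<tau>)" .
  then show ?thesis by (simp add: \<tau>_def)
qed

lemma in_cell:
  fixes x :: "'a::euclidean_space" and \<tau> :: real
  assumes tp: "\<tau> > 0"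
  shows "x \<in> cbox (\<tau> *\<^sub>R fl ((1 / \<tau>) *\<^sub>R x)) (\<tau> *\<^sub>R (fl ((1 / \<tau>) *\<^sub>R x) + One))"
proof -
  have "\<tau> * of_int \<lfloor>x\<bullet>b / \<tau>\<rfloor> \<le> x\<bullet>b" "x\<bullet>b \<le> \<tau> * (of_int \<lfloor>x\<bullet>b / \<tau>\<rfloor> + 1)" for b
  proof -
    have h1: "of_int \<lfloor>x\<bullet>b / \<tau>\<rfloor> \<le> x\<bullet>b / \<tau>" by simp
    have h2: "x\<bullet>b / \<tau> \<le> of_int \<lfloor>x\<bullet>b / \<tau>\<rfloor> + 1" by linarith
    show "\<tau> * of_int \<lfloor>x\<bullet>b / \<tau>\<rfloor> \<le> x\<bullet>b"
      using h1 tp by (metis pos_le_divide_eq mult.commute)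
    show "x\<bullet>b \<le> \<tau> * (of_int \<lfloor>x\<bullet>b / \<tau>\<rfloor> + 1)"
      using h2 tp by (simp only: pos_divide_le_eq mult.commute)
  qed
  note hh = this
  show ?thesis
    unfolding mem_box
  proof (intro ballI conjI)
    fix b :: 'a assume b: "b \<in> Basis"
    have f: "fl ((1 / \<tau>) *\<^sub>R x) \<bullet> b = of_int \<lfloor>x\<bullet>b / \<tau>\<rfloor>" using b by (simp add: fl_inner)
    show "(\<tau> *\<^sub>R fl ((1 / \<tau>) *\<^sub>R x)) \<bullet> b \<le> x \<bullet> b" using hh(1)[of b] by (simp add: f)
    show "x \<bullet> b \<le> (\<tau> *\<^sub>R (fl ((1 / \<tau>) *\<^sub>R x) + One)) \<bullet> b" using hh(2)[of b] b by (simp add: f inner_add_left)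
  qed
qed

lemma cell_inner: "b \<in> Basis \<Longrightarrow> fl ((1 / \<tau>) *\<^sub>R x) \<bullet> b = of_int \<lfloor>x\<bullet>b / \<tau>\<rfloor>"
  by (simp add: fl_inner)

lemma in_dyadic_fl:
  fixes x :: "'a::euclidean_space"
  shows "x \<in> dyadic_cube k (fl ((1 / 2 powr (- real_of_int k)) *\<^sub>R x))"
  unfolding dyadic_cube_def by (rule in_cell) simp


lemma covering_number_le:
  assumes "finite C" "E \<subseteq> (\<Union>c\<in>C. cball c \<delta>)"
  shows "covering_number \<delta> E \<le> card C"
  unfolding covering_number_def
  by (rule cInf_lower) (use assms in auto)

lemma many_cells:
  fixes A :: "'a::euclidean_space set"
  assumes tp: "\<tau> > 0" and td: "real DIM('a) * \<tau> \<le> \<delta>"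
    and fin: "finite ((\<lambda>x. fl ((1/\<tau>) *\<^sub>R x)) ` A)"
    and cov: "N \<le> covering_number \<delta> A"
  shows "N \<le> card ((\<lambda>x. fl ((1/\<tau>) *\<^sub>R x)) ` A)"
proof (rule ccontr)
  assume "\<not> ?thesis"
  then have lt: "card ((\<lambda>x. fl ((1/\<tau>) *\<^sub>R x)) ` A) < N" by simp
  define C where "C = (\<lambda>p. \<tau> *\<^sub>R p) ` ((\<lambda>x. fl ((1/\<tau>) *\<^sub>R x)) ` A)"
  have finC: "finite C" using fin by (simp add: C_def)
  have "card C \<le> card ((\<lambda>x. fl ((1/\<tau>) *\<^sub>R x)) ` A)" unfolding C_def by (rule card_image_le[OF fin])
  have "A \<subseteq> (\<Union>c\<in>C. cball c \<delta>)"
  proof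
    fix x assume x: "x \<in> A"
    define c where "c = \<tau> *\<^sub>R fl ((1/\<tau>) *\<^sub>R x)"
    have cC: "c \<in> C" using x by (auto simp: C_def c_def)
    have box: "x \<in> cbox c (\<tau> *\<^sub>R (fl ((1 / \<tau>) *\<^sub>R x) + One))" using in_cell[OF tp, of x] by (simp add: c_def)
    have "norm (c - x) \<le> (\<Sum>b\<in>Basis. \<bar>(c - x)\<bullet>b\<bar>)" by (rule norm_le_l1)
    also have "\<dots> \<le> (\<Sum>b\<in>(Basis::'a set). \<tau>)"
    proof (rule sum_mono)
      fix b :: 'a assume b: "b \<in> Basis"
      have "c\<bullet>b \<le> x\<bullet>b" "x\<bullet>b \<le> \<tau> * (fl ((1 / \<tau>) *\<^sub>R x) \<bullet> b + 1)"
        using box b by (auto simp: mem_box c_def inner_add_left)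
      then have "c\<bullet>b \<le> x\<bullet>b" "x\<bullet>b \<le> c\<bullet>b + \<tau>" by (simp_all add: c_def distrib_left)
      then show "\<bar>(c - x)\<bullet>b\<bar> \<le> \<tau>" by (simp add: inner_diff_left)
    qed
    also have "\<dots> = real DIM('a) * \<tau>" by simp
    also have "\<dots> \<le> \<delta>" by (rule td)
    finally have "dist c x \<le> \<delta>" by (simp add: dist_norm)
    then show "x \<in> (\<Union>c\<in>C. cball c \<delta>)" using cC by auto
  qed
  then have "covering_number \<delta> A \<le> card C" by (rule covering_number_le[OF finC])
  with cov \<open>card C \<le> _\<close> lt show False by linarith
qed

lemma floor_diff_bounds:
  fixes a b :: real
  shows "\<lfloor>a\<rfloor> - \<lfloor>b\<rfloor> - 1 \<le> \<lfloor>a - b\<rfloor>" "\<lfloor>a - b\<rfloor> \<le> \<lfloor>a\<rfloor> - \<lfloor>b\<rfloor>"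
proof -
  have "of_int (\<lfloor>a\<rfloor> - \<lfloor>b\<rfloor> - 1) \<le> a - b"
    using of_int_floor_le[of a] real_of_int_floor_gt_diff_one[of b] by linarith
  then show "\<lfloor>a\<rfloor> - \<lfloor>b\<rfloor> - 1 \<le> \<lfloor>a - b\<rfloor>" by (simp only: le_floor_iff)
  have h1: "a < of_int \<lfloor>a\<rfloor> + 1" by (rule real_of_int_floor_add_one_gt)
  have h2: "of_int \<lfloor>b\<rfloor> \<le> b" by (rule of_int_floor_le)
  have h3: "of_int (\<lfloor>a\<rfloor> - \<lfloor>b\<rfloor> + 1) = of_int \<lfloor>a\<rfloor> - of_int \<lfloor>b\<rfloor> + (1::real)" by simp
  have "a - b < of_int (\<lfloor>a\<rfloor> - \<lfloor>b\<rfloor> + 1)" unfolding h3 using h1 h2 by linarith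
  then have "\<lfloor>a - b\<rfloor> < \<lfloor>a\<rfloor> - \<lfloor>b\<rfloor> + 1" by (simp only: floor_less_iff)
  then show "\<lfloor>a - b\<rfloor> \<le> \<lfloor>a\<rfloor> - \<lfloor>b\<rfloor>" by simp
qed

lemma cover:
  fixes v :: "'a::euclidean_space" and A :: "'a set"
  assumes tp: "\<tau> > 0" and sdef: "s = \<tau> * real n" and sk0: "2 powr (- real_of_int k0) = s"
    and tk: "2 powr (- real_of_int k) = \<tau>"
    and v: "v \<in> int_lattice" and td: "real DIM('a) * \<tau> \<le> \<delta>"
    and Bdef: "B = \<Union>((\<lambda>(p,e). dyadic_cube k (real n *\<^sub>R v + p + e)) ` (S \<times> lat_box (-1) 0))"
    and unc: "\<And>Y t. Y \<subseteq> lat_box 0 (real n) \<Longrightarrow> card Y = N \<Longrightarrow> t \<in> lat_box 0 (real n) \<Longrightarrow>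
                card {u \<in> (+) t ` lat_box 0 (real n). \<forall>y\<in>Y. u - y \<notin> S} \<le> Bnd"
    and A: "A \<subseteq> cbox 0 (s *\<^sub>R One)" and cov: "N \<le> covering_number \<delta> A" and a0: "a0 \<in> A"
  shows "ennreal (s ^ DIM('a)) \<le> lmeas ((+) a0 ` dyadic_cube k0 v \<inter> set_plus A B) + ennreal (real Bnd * \<tau> ^ DIM('a))"
proof -
  define cl where "cl x = fl ((1/\<tau>) *\<^sub>R x)" for x :: 'a
  define Box0 where "Box0 = (lat_box 0 (real n) :: 'a set)"
  have cli: "cl x \<bullet> b = of_int \<lfloor>x\<bullet>b / \<tau>\<rfloor>" if "b \<in> Basis" for x b
    unfolding cl_def using that by (rule cell_inner)
  have finB: "finite Box0" unfolding Box0_def using lat_box_card by blast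
  have sn: "s / \<tau> = real n" using tp sdef by simp
  have nv: "real n *\<^sub>R v \<in> int_lattice"
    using lattice_scale[OF v, of "int n"] by simp
  have clA: "cl ` A \<subseteq> Box0"
  proof
    fix y assume "y \<in> cl ` A"
    then obtain x where x: "x \<in> A" "y = cl x" by auto
    have "0 \<le> \<lfloor>x\<bullet>b / \<tau>\<rfloor> \<and> of_int \<lfloor>x\<bullet>b / \<tau>\<rfloor> \<le> real n" if b: "b \<in> Basis" for b
    proof -
      have "0 \<le> x\<bullet>b" "x\<bullet>b \<le> s" using A x(1) b by (auto simp: mem_box)
      then have "0 \<le> x\<bullet>b / \<tau>" "x\<bullet>b / \<tau> \<le> real n"
        using tp sn divide_right_mono[of "x\<bullet>b" s \<tau>] by auto
      then show ?thesis by linarith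
    qed
    moreover have "cl x \<in> int_lattice" by (simp add: cl_def fl_lattice)
    ultimately show "y \<in> Box0" using x by (auto simp: Box0_def lat_box_def cli)
  qed
  have finclA: "finite (cl ` A)" using finite_subset[OF clA finB] .
  have "N \<le> card (cl ` A)"
    unfolding cl_def by (rule many_cells[OF tp td]) (use finclA cov in \<open>auto simp: cl_def\<close>)
  then obtain Y where Y: "Y \<subseteq> cl ` A" "card Y = N" by (meson obtain_subset_with_card_n)
  define t where "t = cl a0"
  have t: "t \<in> Box0" using clA a0 by (auto simp: t_def)
  define Unc where "Unc = {u \<in> (+) t ` Box0. \<forall>y\<in>Y. u - y \<notin> S}"
  have cU: "card Unc \<le> Bnd" unfolding Unc_def Box0_def using unc Y clA t by (auto simp: Box0_def)
  have finU: "finite Unc" using finB by (auto simp: Unc_def)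
  define W where "W = (+) a0 ` dyadic_cube k0 v"
  define R where "R = (\<Union>u\<in>Unc. dyadic_cube k (real n *\<^sub>R v + u))"
  have WR: "W \<subseteq> set_plus A B \<union> R"
  proof
    fix z assume zW: "z \<in> W"
    show "z \<in> set_plus A B \<union> R"
    proof (cases "z \<in> set_plus A B")
      case True then show ?thesis by simp
    next
      case False
      obtain q where q: "q \<in> dyadic_cube k0 v" "z = a0 + q" using zW by (auto simp: W_def)
      define u where "u = cl z - real n *\<^sub>R v"
      define w where "w = u - t"
      have wB: "w \<in> Box0"
      proof -
        have "w \<in> int_lattice" unfolding w_def u_def t_def cl_def
          by (intro lattice_diff fl_lattice nv)
        moreover have "0 \<le> w\<bullet>b \<and> w\<bullet>b \<le> real n" if b: "b \<in> Basis" for b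
        proof -
          obtain iv where iv: "v\<bullet>b = of_int iv" using v b by (auto simp: int_lattice_def elim!: Ints_cases)
          have "s * (v\<bullet>b) \<le> q\<bullet>b" "q\<bullet>b \<le> s * (v\<bullet>b + 1)"
            using q(1) b unfolding dyadic_cube_def sk0 by (auto simp: mem_box inner_add_left)
          then have qq: "real n * (v\<bullet>b) \<le> q\<bullet>b / \<tau>" "q\<bullet>b / \<tau> \<le> real n * (v\<bullet>b) + real n"
            using tp by (auto simp: sdef field_simps)
          have zz: "z\<bullet>b / \<tau> = a0\<bullet>b / \<tau> + q\<bullet>b / \<tau>" using q(2) by (simp add: inner_add_left add_divide_distrib)
          have f1: "of_int \<lfloor>a0\<bullet>b / \<tau>\<rfloor> \<le> a0\<bullet>b / \<tau>" "a0\<bullet>b / \<tau> < of_int \<lfloor>a0\<bullet>b / \<tau>\<rfloor> + 1"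
            by (rule of_int_floor_le, rule real_of_int_floor_add_one_gt)
          have qq': "real n * of_int iv \<le> q\<bullet>b / \<tau>" "q\<bullet>b / \<tau> \<le> real n * of_int iv + real n"
            using qq iv by simp_all
          have c1: "of_int (\<lfloor>a0\<bullet>b / \<tau>\<rfloor> + int n * iv) = of_int \<lfloor>a0\<bullet>b / \<tau>\<rfloor> + real n * of_int iv" by simp
          have c2: "of_int (\<lfloor>a0\<bullet>b / \<tau>\<rfloor> + int n * iv + int n + 1) = of_int \<lfloor>a0\<bullet>b / \<tau>\<rfloor> + real n * of_int iv + real n + (1::real)" by simp
          have "of_int (\<lfloor>a0\<bullet>b / \<tau>\<rfloor> + int n * iv) \<le> z\<bullet>b / \<tau>"
            unfolding c1 zz using qq' f1 by linarith
          then have L: "\<lfloor>a0\<bullet>b / \<tau>\<rfloor> + int n * iv \<le> \<lfloor>z\<bullet>b / \<tau>\<rfloor>" by (simp only: le_floor_iff)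
          have "z\<bullet>b / \<tau> < of_int (\<lfloor>a0\<bullet>b / \<tau>\<rfloor> + int n * iv + int n + 1)"
            unfolding c2 zz using qq' f1 by linarith
          then have "\<lfloor>z\<bullet>b / \<tau>\<rfloor> < \<lfloor>a0\<bullet>b / \<tau>\<rfloor> + int n * iv + int n + 1" by (simp only: floor_less_iff)
          then have U: "\<lfloor>z\<bullet>b / \<tau>\<rfloor> \<le> \<lfloor>a0\<bullet>b / \<tau>\<rfloor> + int n * iv + int n" by simp
          have we: "w\<bullet>b = of_int (\<lfloor>z\<bullet>b / \<tau>\<rfloor> - int n * iv - \<lfloor>a0\<bullet>b / \<tau>\<rfloor>)"
            using b by (simp add: w_def u_def t_def inner_diff_left cli iv)
          define X where "X = \<lfloor>z\<bullet>b / \<tau>\<rfloor> - int n * iv - \<lfloor>a0\<bullet>b / \<tau>\<rfloor>"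
          have i1: "0 \<le> X" "X \<le> int n" using L U unfolding X_def by linarith+
          have "real_of_int X \<le> real_of_int (int n)" using i1(2) by (simp only: of_int_le_iff)
          then show ?thesis unfolding we X_def[symmetric] using i1(1) by simp
        qed
        ultimately show ?thesis by (auto simp: Box0_def lat_box_def)
      qed
      have uU: "u \<in> (+) t ` Box0" using wB by (intro image_eqI[of _ _ w]) (auto simp: w_def)
      have uUnc: "u \<in> Unc"
      proof (rule ccontr)
        assume "u \<notin> Unc"
        then obtain y where yY: "y \<in> Y" and uyS: "u - y \<in> S" using uU by (auto simp: Unc_def)
        obtain x where x: "x \<in> A" "y = cl x" using yY Y(1) by auto
        define e where "e = cl (z - x) - real n *\<^sub>R v - (u - y)"
        have eE: "e \<in> lat_box (-1) 0"
        proof -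
          have "e \<in> int_lattice" unfolding e_def u_def x(2) cl_def
            by (intro lattice_diff fl_lattice nv)
          moreover have "-1 \<le> e\<bullet>b \<and> e\<bullet>b \<le> 0" if b: "b \<in> Basis" for b
          proof -
            have ee: "e\<bullet>b = of_int (\<lfloor>z\<bullet>b / \<tau> - x\<bullet>b / \<tau>\<rfloor> - \<lfloor>z\<bullet>b / \<tau>\<rfloor> + \<lfloor>x\<bullet>b / \<tau>\<rfloor>)"
              using b by (simp add: e_def u_def x(2) inner_diff_left cli diff_divide_distrib)
            show ?thesis unfolding ee using floor_diff_bounds[of "z\<bullet>b / \<tau>" "x\<bullet>b / \<tau>"] by linarith
          qed
          ultimately show ?thesis by (auto simp: lat_box_def)
        qed
        have "z - x \<in> dyadic_cube k (cl (z - x))" unfolding cl_def tk[symmetric] by (rule in_dyadic_fl)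
        moreover have "cl (z - x) = real n *\<^sub>R v + (u - y) + e" by (simp add: e_def)
        ultimately have "z - x \<in> B" unfolding Bdef using uyS eE by auto
        then have "z \<in> set_plus A B" unfolding set_plus_def using x(1)
          by (intro CollectI exI[of _ x] exI[of _ "z - x"]) simp
        then show False using False by simp
      qed
      have "z \<in> dyadic_cube k (cl z)" unfolding cl_def tk[symmetric] by (rule in_dyadic_fl)
      moreover have "cl z = real n *\<^sub>R v + u" by (simp add: u_def)
      ultimately show ?thesis using uUnc by (auto simp: R_def)
    qed
  qed
  have cube_sets: "dyadic_cube k' w' \<in> sets lebesgue" for k' and w' :: 'a
    by (simp add: dyadic_cube_def)
  have Rs: "R \<in> sets lebesgue" unfolding R_def using finU cube_sets by auto
  have "emeasure lebesgue R \<le> (\<Sum>u\<in>Unc. emeasure lebesgue (dyadic_cube k (real n *\<^sub>R v + u)))"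
    unfolding R_def by (rule emeasure_subadditive_finite[OF finU]) (use cube_sets in auto)
  also have "\<dots> = (\<Sum>u\<in>Unc. ennreal (\<tau> ^ DIM('a)))"
  proof (rule sum.cong[OF refl])
    fix u :: 'a
    have "emeasure lebesgue (dyadic_cube k (real n *\<^sub>R v + u)) = lmeas (dyadic_cube k (real n *\<^sub>R v + u))"
      by (rule outer_measure_of_eq[OF cube_sets, symmetric])
    also have "\<dots> = ennreal (\<tau> ^ DIM('a))" using lmeas_dyadic[of k "real n *\<^sub>R v + u"] unfolding tk .
    finally show "emeasure lebesgue (dyadic_cube k (real n *\<^sub>R v + u)) = ennreal (\<tau> ^ DIM('a))" .
  qed
  also have "\<dots> = ennreal (real (card Unc) * \<tau> ^ DIM('a))"
    using tp by (simp add: ennreal_of_nat_eq_real_of_nat ennreal_mult)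
  also have "\<dots> \<le> ennreal (real Bnd * \<tau> ^ DIM('a))"
    using cU tp by (intro ennreal_leI mult_right_mono) auto
  finally have mR: "emeasure lebesgue R \<le> ennreal (real Bnd * \<tau> ^ DIM('a))" .
  have Weq: "W = cbox (a0 + s *\<^sub>R v) (a0 + s *\<^sub>R (v + One))"
    unfolding W_def dyadic_cube_def sk0 by (rule cbox_translation[symmetric])
  have lW: "lmeas W = ennreal (s ^ DIM('a))"
  proof -
    have sp: "s > 0" unfolding sk0[symmetric] by simp
    have "lmeas W = ennreal (\<Prod>b\<in>(Basis::'a set). (a0 + s *\<^sub>R (v + One) - (a0 + s *\<^sub>R v)) \<bullet> b)"
      unfolding Weq by (rule lmeas_cbox) (use sp in \<open>auto simp: inner_add_left\<close>)
    also have "\<dots> = ennreal (\<Prod>b\<in>(Basis::'a set). s)"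
      by (intro arg_cong[where f=ennreal] prod.cong refl) (simp add: algebra_simps inner_add_left)
    finally show ?thesis by simp
  qed
  obtain E where E: "E \<in> sets lebesgue" "W \<inter> set_plus A B \<subseteq> E"
    "lmeas (W \<inter> set_plus A B) = emeasure lebesgue E"
    using outer_measure_of_attain[of "W \<inter> set_plus A B" lebesgue] by auto
  have "W \<subseteq> E \<union> R" using WR E(2) by blast
  then have "lmeas W \<le> lmeas (E \<union> R)" by (rule outer_measure_of_mono)
  also have "\<dots> = emeasure lebesgue (E \<union> R)" using E(1) Rs by (simp add: outer_measure_of_eq)
  also have "\<dots> \<le> emeasure lebesgue E + emeasure lebesgue R" by (rule emeasure_subadditive) (use E(1) Rs in auto)
  also have "\<dots> \<le> lmeas (W \<inter> set_plus A B) + ennreal (real Bnd * \<tau> ^ DIM('a))"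
    using E(3) mR by (simp add: add_left_mono)
  finally show ?thesis using lW by (simp add: W_def)
qed


lemma indep_subset:
  fixes V :: "'g set" and R :: "'g \<Rightarrow> 'g \<Rightarrow> bool"
  assumes "finite V" "\<And>u w. R u w \<Longrightarrow> R w u"
    "\<And>u. u \<in> V \<Longrightarrow> card {w\<in>V. w \<noteq> u \<and> R u w} \<le> \<Delta>"
    "(\<Delta>+1)*a \<le> card V"
  shows "\<exists>T\<subseteq>V. card T = a \<and> (\<forall>u\<in>T. \<forall>w\<in>T. u \<noteq> w \<longrightarrow> \<not> R u w)"
  using assms(1,3,4)
proof (induction a arbitrary: V)
  case 0
  then show ?case by (intro exI[of _ "{}"]) auto
next
  case (Suc a)
  then have "V \<noteq> {}" by auto
  then obtain x where x: "x \<in> V" by auto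
  define V' where "V' = V - insert x {w\<in>V. w \<noteq> x \<and> R x w}"
  have fin: "finite V'" using Suc.prems by (auto simp: V'_def)
  have "card (insert x {w\<in>V. w \<noteq> x \<and> R x w}) \<le> \<Delta> + 1"
  proof -
    have "card (insert x {w\<in>V. w \<noteq> x \<and> R x w}) \<le> Suc (card {w\<in>V. w \<noteq> x \<and> R x w})"
      by (rule card_insert_le_m1) auto
    then show ?thesis using Suc.prems(2)[OF x] by linarith
  qed
  moreover have "card V' = card V - card (insert x {w\<in>V. w \<noteq> x \<and> R x w})"
    unfolding V'_def using Suc.prems(1) x by (intro card_Diff_subset) auto
  ultimately have "(\<Delta>+1)*a \<le> card V'" using Suc.prems(3) by (simp add: algebra_simps)
  moreover have "\<And>u. u \<in> V' \<Longrightarrow> card {w\<in>V'. w \<noteq> u \<and> R u w} \<le> \<Delta>"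
  proof -
    fix u assume "u \<in> V'"
    then have "u \<in> V" by (auto simp: V'_def)
    have "card {w\<in>V'. w \<noteq> u \<and> R u w} \<le> card {w\<in>V. w \<noteq> u \<and> R u w}"
      using Suc.prems(1) by (intro card_mono) (auto simp: V'_def)
    then show "card {w\<in>V'. w \<noteq> u \<and> R u w} \<le> \<Delta>" using Suc.prems(2)[OF \<open>u\<in>V\<close>] by linarith
  qed
  ultimately obtain T' where T': "T' \<subseteq> V'" "card T' = a" "\<forall>u\<in>T'. \<forall>w\<in>T'. u \<noteq> w \<longrightarrow> \<not> R u w"
    using Suc.IH[OF fin] by blast
  have "x \<notin> T'" using T'(1) by (auto simp: V'_def)
  have "finite T'" using T'(1) fin finite_subset by blast
  show ?case
  proof (intro exI[of _ "insert x T'"] conjI)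
    show "insert x T' \<subseteq> V" using T'(1) x by (auto simp: V'_def)
    show "card (insert x T') = Suc a" using \<open>x \<notin> T'\<close> \<open>finite T'\<close> T'(2) by simp
    show "\<forall>u\<in>insert x T'. \<forall>w\<in>insert x T'. u \<noteq> w \<longrightarrow> \<not> R u w"
      using T'(1,3) assms(2) by (auto simp: V'_def)
  qed
qed

lemma count_PiE:
  assumes "finite P" "D \<subseteq> P"
  shows "card {f \<in> PiE P (\<lambda>_. {..<K::nat}). \<forall>p\<in>D. f p \<in> C} = card ({..<K} \<inter> C)^card D * K^(card P - card D)"
proof -
  have "{f \<in> PiE P (\<lambda>_. {..<K::nat}). \<forall>p\<in>D. f p \<in> C} = PiE P (\<lambda>p. if p \<in> D then {..<K} \<inter> C else {..<K})"
    using assms(2) by (auto simp: PiE_def Pi_def)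
  then have "card {f \<in> PiE P (\<lambda>_. {..<K::nat}). \<forall>p\<in>D. f p \<in> C} = (\<Prod>p\<in>P. card (if p \<in> D then {..<K} \<inter> C else {..<K}))"
    using assms(1) by (simp add: card_PiE)
  also have "\<dots> = (\<Prod>p\<in>P \<inter> D. card ({..<K} \<inter> C)) * (\<Prod>p\<in>P - D. card {..<K})"
    using assms(1) by (simp add: prod.If_cases if_distrib Diff_eq)
  also have "\<dots> = card ({..<K} \<inter> C)^card D * K^(card P - card D)"
    using assms by (simp add: Int_absorb1 card_Diff_subset finite_subset)
  finally show ?thesis .
qed

lemma core:
  fixes P :: "'g::ab_group_add set" and Cfg :: "('g set \<times> 'g set) set"
  assumes finP: "finite P" and Pne: "P \<noteq> {}" and finC: "finite Cfg" and Kpos: "K > 0"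
    and cfg: "\<And>Y U. (Y,U) \<in> Cfg \<Longrightarrow> finite Y \<and> card Y = N \<and> finite U \<and> card U \<le> L \<and> (\<forall>u\<in>U. \<forall>y\<in>Y. u - y \<in> P)"
    and num: "real (card Cfg) * real (L choose a) * (real (K-1) / real K)^(a*N) < 1/2"
  shows "\<exists>S\<subseteq>P. real (card S) \<le> 2 * real (card P) / real K \<and>
           (\<forall>(Y,U)\<in>Cfg. card {u\<in>U. \<forall>y\<in>Y. u - y \<notin> S} < (N*N+1)*a)"
proof -
  define F where "F = PiE P (\<lambda>_. {..<K})"
  define Sf where "Sf f = {p\<in>P. f p = (0::nat)}" for f
  define Big where "Big = {f\<in>F. real (card (Sf f)) > 2 * real (card P) / real K}"
  define Bad where "Bad = {f\<in>F. \<exists>(Y,U)\<in>Cfg. card {u\<in>U. \<forall>y\<in>Y. u - y \<notin> Sf f} \<ge> (N*N+1)*a}"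
  have finF: "finite F" using finP by (simp add: F_def finite_PiE)
  have cardF: "card F = K ^ card P" using finP by (simp add: F_def card_PiE)
  have cardP: "card P > 0" using finP Pne by (simp add: card_gt_0_iff)
  \<comment> \<open>Markov for Big\<close>
  have sumS: "(\<Sum>f\<in>F. card (Sf f)) = card P * K ^ (card P - 1)"
  proof -
    have "(\<Sum>f\<in>F. card (Sf f)) = (\<Sum>f\<in>F. \<Sum>p\<in>P. if f p = 0 then 1 else 0)"
      using finP by (intro sum.cong refl) (simp add: Sf_def sum.If_cases Int_def conj_commute)
    also have "\<dots> = (\<Sum>p\<in>P. \<Sum>f\<in>F. if f p = 0 then 1 else 0)" by (rule sum.swap)
    also have "\<dots> = (\<Sum>p\<in>P. card {f\<in>F. f p = 0})"
      using finF by (intro sum.cong refl) (simp add: sum.If_cases Int_def conj_commute)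
    also have "\<dots> = (\<Sum>p\<in>P. K ^ (card P - 1))"
    proof (intro sum.cong refl)
      fix p assume p: "p \<in> P"
      have "card {f\<in>F. \<forall>q\<in>{p}. f q \<in> {0}} = card ({..<K} \<inter> {0}) ^ card {p} * K ^ (card P - card {p})"
        unfolding F_def by (rule count_PiE) (use finP p in auto)
      moreover have "{f\<in>F. \<forall>q\<in>{p}. f q \<in> {0}} = {f\<in>F. f p = 0}" by auto
      moreover have "{..<K} \<inter> {0::nat} = {0}" using Kpos by auto
      ultimately show "card {f\<in>F. f p = 0} = K ^ (card P - 1)" by simp
    qed
    finally show ?thesis by simp
  qed
  have Big_le: "real (card Big) \<le> real (card F) / 2"
  proof -
    have "real (card Big) * (2 * real (card P) / real K) \<le> (\<Sum>f\<in>Big. real (card (Sf f)))"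
    proof -
      have "(\<Sum>f\<in>Big. 2 * real (card P) / real K) \<le> (\<Sum>f\<in>Big. real (card (Sf f)))"
        by (rule sum_mono) (simp add: Big_def less_imp_le)
      then show ?thesis by simp
    qed
    also have "\<dots> \<le> (\<Sum>f\<in>F. real (card (Sf f)))"
      using finF by (intro sum_mono2) (auto simp: Big_def)
    also have "\<dots> = real (card P) * real K ^ (card P - 1)"
    proof -
      have "real (\<Sum>f\<in>F. card (Sf f)) = real (card P) * real K ^ (card P - 1)"
        by (simp only: sumS of_nat_mult of_nat_power)
      then show ?thesis by simp
    qed
    also have "\<dots> = real (card P) * real (card F) / real K"
    proof -
      obtain m where m: "card P = Suc m" using cardP gr0_implies_Suc by blast
      have "real K ^ card P = real K * real K ^ (card P - 1)"
        unfolding m by simp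
      then show ?thesis using Kpos by (simp add: cardF)
    qed
    finally have "real (card Big) * (2 * real (card P) / real K) \<le> real (card P) * real (card F) / real K" .
    then have "real (card Big) * (2 * real (card P)) \<le> real (card P) * real (card F)"
      using Kpos by (simp add: divide_le_cancel)
    then show ?thesis using cardP by (simp add: mult.commute mult_le_cancel_left)
  qed
  \<comment> \<open>union bound for Bad\<close>
  define blk where "blk Y u = (\<lambda>y. u - y) ` Y" for Y :: "'g set" and u
  define Tf where "Tf Y U = {T. T \<subseteq> U \<and> card T = a \<and> (\<forall>u\<in>T. \<forall>w\<in>T. u \<noteq> w \<longrightarrow> blk Y u \<inter> blk Y w = {})}" for Y U
  define G where "G D = {f\<in>F. \<forall>p\<in>D. f p \<in> - {0}}" for D
  define q where "q = (real (K-1) / real K)^(a*N)"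
  have Bad_sub: "Bad \<subseteq> (\<Union>(Y,U)\<in>Cfg. \<Union>T\<in>Tf Y U. G (\<Union>u\<in>T. blk Y u))"
  proof
    fix f assume "f \<in> Bad"
    then obtain Y U where YU: "(Y,U) \<in> Cfg" and big: "card {u\<in>U. \<forall>y\<in>Y. u - y \<notin> Sf f} \<ge> (N*N+1)*a"
      and fF: "f \<in> F" by (auto simp: Bad_def)
    note c = cfg[OF YU]
    define V where "V = {u\<in>U. \<forall>y\<in>Y. u - y \<notin> Sf f}"
    have deg: "card {w\<in>V. w \<noteq> u \<and> blk Y u \<inter> blk Y w \<noteq> {}} \<le> N*N" for u
    proof -
      have "{w\<in>V. w \<noteq> u \<and> blk Y u \<inter> blk Y w \<noteq> {}} \<subseteq> (\<lambda>(y,y'). u - y + y') ` (Y \<times> Y)"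
      proof
        fix w assume "w \<in> {w\<in>V. w \<noteq> u \<and> blk Y u \<inter> blk Y w \<noteq> {}}"
        then obtain y y' where "y \<in> Y" "y' \<in> Y" "u - y = w - y'" by (auto simp: blk_def)
        then have "w = u - y + y'" by (simp add: algebra_simps)
        then show "w \<in> (\<lambda>(y,y'). u - y + y') ` (Y \<times> Y)" using \<open>y\<in>Y\<close> \<open>y'\<in>Y\<close> by force
      qed
      then have "card {w\<in>V. w \<noteq> u \<and> blk Y u \<inter> blk Y w \<noteq> {}} \<le> card ((\<lambda>(y,y'). u - y + y') ` (Y \<times> Y))"
        using c by (intro card_mono) auto
      also have "\<dots> \<le> card (Y \<times> Y)" by (rule card_image_le) (use c in auto)
      also have "\<dots> = N*N" using c by (simp add: card_cartesian_product)
      finally show ?thesis .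
    qed
    have finV: "finite V" using c by (simp add: V_def)
    have bigV: "(N*N+1)*a \<le> card V" using big by (simp add: V_def)
    have symm: "\<And>u w. blk Y u \<inter> blk Y w \<noteq> {} \<Longrightarrow> blk Y w \<inter> blk Y u \<noteq> {}" by blast
    obtain T where T: "T \<subseteq> V" "card T = a" "\<forall>u\<in>T. \<forall>w\<in>T. u \<noteq> w \<longrightarrow> \<not> blk Y u \<inter> blk Y w \<noteq> {}"
      using indep_subset[of V "\<lambda>u w. blk Y u \<inter> blk Y w \<noteq> {}" "N*N" a, OF finV symm deg bigV] by blast
    have "T \<in> Tf Y U" using T by (auto simp: Tf_def V_def)
    moreover have "f \<in> G (\<Union>u\<in>T. blk Y u)"
    proof -
      have "\<forall>p\<in>(\<Union>u\<in>T. blk Y u). f p \<in> - {0}"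
      proof
        fix p assume "p \<in> (\<Union>u\<in>T. blk Y u)"
        then obtain u y where uy: "u \<in> T" "y \<in> Y" "p = u - y" by (auto simp: blk_def)
        then have "u \<in> V" using T(1) by blast
        then have "u \<in> U" "u - y \<notin> Sf f" using uy(2) by (auto simp: V_def)
        moreover have "u - y \<in> P" using c \<open>u \<in> U\<close> uy(2) by blast
        ultimately show "f p \<in> - {0}" using uy(3) by (simp add: Sf_def)
      qed
      then show ?thesis using fF by (simp add: G_def)
    qed
    ultimately show "f \<in> (\<Union>(Y,U)\<in>Cfg. \<Union>T\<in>Tf Y U. G (\<Union>u\<in>T. blk Y u))" using YU by blast
  qed
  have cardG: "real (card (G (\<Union>u\<in>T. blk Y u))) \<le> real (card F) * q" if YU: "(Y,U) \<in> Cfg" and T: "T \<in> Tf Y U" for Y U T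
  proof -
    note c = cfg[OF YU]
    have finT: "finite T" using T c by (auto simp: Tf_def intro: finite_subset)
    have sub: "(\<Union>u\<in>T. blk Y u) \<subseteq> P" using T c by (auto simp: Tf_def blk_def)
    have cb: "card (blk Y u) = N" for u
      unfolding blk_def using c by (subst card_image) (auto simp: inj_on_def)
    have "card (\<Union>u\<in>T. blk Y u) = (\<Sum>u\<in>T. card (blk Y u))"
      using T c finT by (intro card_UN_disjoint) (auto simp: Tf_def blk_def)
    also have "\<dots> = a * N" using T by (simp add: cb Tf_def)
    finally have cU: "card (\<Union>u\<in>T. blk Y u) = a * N" .
    have le: "a * N \<le> card P" using cU card_mono[OF finP sub] by simp
    have "card (G (\<Union>u\<in>T. blk Y u)) = card ({..<K} \<inter> - {0}) ^ (a*N) * K ^ (card P - a*N)"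
      unfolding G_def F_def by (subst count_PiE[OF finP sub]) (simp only: cU)
    also have "card ({..<K} \<inter> - {0::nat}) = K - 1"
    proof -
      have "{..<K} \<inter> - {0::nat} = {..<K} - {0}" by auto
      then show ?thesis using Kpos by simp
    qed
    finally have eq: "card (G (\<Union>u\<in>T. blk Y u)) = (K - 1) ^ (a*N) * K ^ (card P - a*N)" .
    have "real (card F) * q = real K ^ card P * (real (K-1) / real K)^(a*N)"
      by (simp add: cardF q_def)
    also have "\<dots> = real (K-1) ^ (a*N) * real K ^ (card P - a*N)"
    proof -
      have "real K ^ card P = real K ^ (card P - a*N) * real K ^ (a*N)"
        using le by (simp add: power_add[symmetric])
      then show ?thesis using Kpos by (simp add: power_divide field_simps)
    qed
    finally show ?thesis by (simp add: eq)
  qed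
  have "real (card Bad) \<le> real (card (\<Union>(Y,U)\<in>Cfg. \<Union>T\<in>Tf Y U. G (\<Union>u\<in>T. blk Y u)))"
  proof -
    have "(\<Union>(Y,U)\<in>Cfg. \<Union>T\<in>Tf Y U. G (\<Union>u\<in>T. blk Y u)) \<subseteq> F" by (auto simp: G_def)
    then have "finite (\<Union>(Y,U)\<in>Cfg. \<Union>T\<in>Tf Y U. G (\<Union>u\<in>T. blk Y u))" using finF finite_subset by blast
    then show ?thesis using Bad_sub by (intro of_nat_mono card_mono)
  qed
  also have "\<dots> \<le> (\<Sum>(Y,U)\<in>Cfg. real (card (\<Union>T\<in>Tf Y U. G (\<Union>u\<in>T. blk Y u))))"
    using card_UN_le[OF finC, of "\<lambda>(Y,U). \<Union>T\<in>Tf Y U. G (\<Union>u\<in>T. blk Y u)"]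
    by (simp add: case_prod_unfold of_nat_sum[symmetric] del: of_nat_sum)
  also have "\<dots> \<le> (\<Sum>(Y,U)\<in>Cfg. real (L choose a) * (real (card F) * q))"
  proof (intro sum_mono, clarify)
    fix Y U assume YU: "(Y,U) \<in> Cfg"
    note c = cfg[OF YU]
    have finTf: "finite (Tf Y U)"
      by (rule finite_subset[of _ "Pow U"]) (use c in \<open>auto simp: Tf_def\<close>)
    have "card (Tf Y U) \<le> card {T. T \<subseteq> U \<and> card T = a}"
      using c by (intro card_mono) (simp, auto simp: Tf_def)
    also have "\<dots> = card U choose a" using c by (simp add: n_subsets)
    also have "\<dots> \<le> L choose a" using c by (simp add: binomial_right_mono)
    finally have ct: "card (Tf Y U) \<le> L choose a" .
    have "real (card (\<Union>T\<in>Tf Y U. G (\<Union>u\<in>T. blk Y u))) \<le> (\<Sum>T\<in>Tf Y U. real (card (G (\<Union>u\<in>T. blk Y u))))"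
      using card_UN_le[OF finTf, of "\<lambda>T. G (\<Union>u\<in>T. blk Y u)"]
      by (simp add: of_nat_sum[symmetric] del: of_nat_sum)
    also have "\<dots> \<le> (\<Sum>T\<in>Tf Y U. real (card F) * q)"
      by (intro sum_mono cardG[OF YU])
    also have "\<dots> = real (card (Tf Y U)) * (real (card F) * q)" by simp
    also have "\<dots> \<le> real (L choose a) * (real (card F) * q)"
      by (intro mult_right_mono) (use ct in \<open>auto simp: q_def\<close>)
    finally show "real (card (\<Union>T\<in>Tf Y U. G (\<Union>u\<in>T. blk Y u))) \<le> real (L choose a) * (real (card F) * q)" .
  qed
  also have "\<dots> = real (card F) * (real (card Cfg) * real (L choose a) * q)" by simp
  also have "\<dots> < real (card F) / 2"
  proof -
    have "card F > 0" using cardF Kpos by simp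
    then show ?thesis using num by (simp add: q_def)
  qed
  finally have "real (card Bad) < real (card F) / 2" .
  with Big_le have "real (card (Big \<union> Bad)) < real (card F)"
    using card_Un_le[of Big Bad] by linarith
  then have "\<not> F \<subseteq> Big \<union> Bad"
    using card_mono[of "Big \<union> Bad" F] finF by (auto simp: Big_def Bad_def)
  then obtain f where f: "f \<in> F" "f \<notin> Big" "f \<notin> Bad" by auto
  show ?thesis
  proof (intro exI[of _ "Sf f"] conjI)
    show "Sf f \<subseteq> P" by (auto simp: Sf_def)
    show "real (card (Sf f)) \<le> 2 * real (card P) / real K" using f by (auto simp: Big_def)
    show "\<forall>(Y,U)\<in>Cfg. card {u\<in>U. \<forall>y\<in>Y. u - y \<notin> Sf f} < (N*N+1)*a"
      using f by (auto simp: Bad_def not_le)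
  qed
qed


lemma pow_fact_le_exp:
  fixes a :: nat
  shows "real a ^ a / fact a \<le> exp (real a)"
proof -
  have s: "summable (\<lambda>n. real a ^ n /\<^sub>R fact n)" by (rule summable_exp_generic)
  have "(\<Sum>n\<in>{a}. real a ^ n /\<^sub>R fact n) \<le> (\<Sum>n. real a ^ n /\<^sub>R fact n)"
    by (rule sum_le_suminf[OF s]) auto
  then show ?thesis by (simp add: exp_def divide_inverse mult.commute)
qed

lemma lim1:
  fixes r :: real
  assumes "0 < r" "r < 1"
  shows "((\<lambda>N. (real N * real N + 1) * r ^ N) \<longlongrightarrow> 0) sequentially"
proof -
  have "((\<lambda>N. (real N * real N + 1) * exp (real N * ln r)) \<longlongrightarrow> 0) sequentially"
  proof -
    have "ln r < 0" using assms by simp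
    then show ?thesis by real_asymp
  qed
  moreover have "r ^ N = exp (real N * ln r)" for N using assms by (simp add: exp_of_nat_mult)
  ultimately show ?thesis by simp
qed

lemma lim2:
  fixes c :: real and p :: nat
  assumes "0 < c"
  shows "\<forall>\<^sub>F n in sequentially. 2 * (real n + 1) ^ p < 2 powr (c * real n)"
proof -
  have "((\<lambda>n. 2 * (real n + 1) ^ p / 2 powr (c * real n)) \<longlongrightarrow> 0) sequentially"
    using assms by real_asymp
  then have "\<forall>\<^sub>F n in sequentially. 2 * (real n + 1) ^ p / 2 powr (c * real n) < 1"
    by (rule order_tendstoD) simp
  then show ?thesis by eventually_elim simp
qed


lemma numeric:
  fixes L a N D C d :: nat and r c0 \<epsilon> x y cc nn :: real
  assumes r0: "0 \<le> r" and Nr: "(real N * real N + 1) * r ^ N \<le> c0"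
    and c0: "c0 = \<epsilon> / (2^(d+3) * exp 1)" and ep: "\<epsilon> > 0"
    and Ly: "real L \<le> 2^d * y" and xdef: "x = \<epsilon> * y / real D" and Ddef: "D = N*N+1"
    and x2: "2 \<le> x" and adef: "a = nat \<lfloor>x\<rfloor>" and ccx: "cc * nn \<le> x / 4"
    and Cb: "real C * 2 powr (-(cc*nn)) < 1/2"
  shows "real C * real (L choose a) * r^(a*N) < 1/2"
proof -
  have "D > 0" using Ddef by simp
  then have Dp: "real D > 0" by simp
  have DD: "real D = real N * real N + 1" using Ddef by simp
  have ax: "real a \<le> x" "x - 1 \<le> real a" using adef x2 by linarith+
  then have ax2: "x / 2 \<le> real a" using x2 by linarith
  have apos: "real a > 0" using ax2 x2 by linarith
  have rN: "r ^ N \<le> c0 / real D" using Nr Dp DD by (simp add: pos_le_divide_eq mult.commute)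
  have key: "exp 1 * real L * r ^ N \<le> real a / 2"
  proof -
    have "exp 1 * real L * r ^ N \<le> exp 1 * (2^d * y) * (c0 / real D)"
      using Ly rN r0 by (intro mult_mono) (auto intro: mult_nonneg_nonneg)
    also have "\<dots> = x / 8"
      unfolding c0 xdef by (simp add: field_simps power_add)
    also have "\<dots> \<le> real a / 2" using ax2 x2 by linarith
    finally show ?thesis .
  qed
  have T: "real (L choose a) * r^(a*N) \<le> (1/2) ^ a"
  proof -
    have "(L choose a) * fact a \<le> L ^ a" by (rule binomial_fact_pow)
    then have "real ((L choose a) * fact a) \<le> real (L ^ a)" by (simp only: of_nat_le_iff)
    then have b1: "real (L choose a) * fact a \<le> real L ^ a" by simp
    have fpos: "(fact a :: real) > 0" by simp
    have b2: "real (L choose a) \<le> real L ^ a / fact a" using b1 fpos by (simp add: pos_le_divide_eq)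
    have f1: "real a ^ a / fact a \<le> exp (real a)" by (rule pow_fact_le_exp)
    have rr: "r^(a*N) = (r ^ N) ^ a" by (simp add: power_mult mult.commute)
    have "real (L choose a) * r^(a*N) \<le> real L ^ a / fact a * (r ^ N) ^ a"
      unfolding rr using b2 r0 by (intro mult_right_mono) simp_all
    also have "\<dots> = (real L * r ^ N) ^ a * (1 / fact a)" by (simp add: power_mult_distrib)
    also have "\<dots> \<le> (real L * r ^ N) ^ a * (exp (real a) / real a ^ a)"
    proof (rule mult_left_mono)
      show "1 / fact a \<le> exp (real a) / real a ^ a"
        using f1 apos fpos by (simp add: field_simps)
      show "0 \<le> (real L * r ^ N) ^ a" using r0 by simp
    qed
    also have "\<dots> = (exp 1 * real L * r ^ N / real a) ^ a"
    proof -
      have "exp (real a) = exp 1 ^ a" using exp_of_nat_mult[of a 1] by simp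
      then show ?thesis by (simp add: power_divide power_mult_distrib)
    qed
    also have "\<dots> \<le> (1/2) ^ a"
    proof (rule power_mono)
      show "exp 1 * real L * r ^ N / real a \<le> 1/2" using key apos by (simp add: divide_le_eq)
      show "0 \<le> exp 1 * real L * r ^ N / real a" using r0 by simp
    qed
    finally show ?thesis .
  qed
  have "(1/2::real) ^ a = 2 powr (- real a)"
    by (simp add: powr_minus powr_realpow power_one_over inverse_eq_divide)
  also have "\<dots> \<le> 2 powr (-(cc*nn))" using ccx ax2 x2 by simp
  finally have h: "(1/2::real) ^ a \<le> 2 powr (-(cc*nn))" .
  have "real C * real (L choose a) * r^(a*N) \<le> real C * 2 powr (-(cc*nn))"
    using T h by (simp add: mult.assoc mult_left_mono)
  then show ?thesis using Cb by linarith
qed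


lemma ev_ge: "\<forall>\<^sub>F n in sequentially. M \<le> real n"
  unfolding eventually_sequentially
  by (intro exI[of _ "nat \<lceil>M\<rceil>"]) (auto intro: order.trans[OF real_nat_ceiling_ge])


lemma ennreal_sub_aux:
  assumes "0 \<le> b" "ennreal a \<le> X + ennreal b"
  shows "ennreal (a - b) \<le> X"
proof (cases X)
  case (real x)
  have eq: "X + ennreal b = ennreal (x + b)" using real assms(1) by (simp add: ennreal_plus)
  have "ennreal a \<le> ennreal (x + b)" using assms(2) unfolding eq .
  then have "a \<le> x + b" using real assms(1) by (subst (asm) ennreal_le_iff) auto
  then have "a - b \<le> x" by simp
  then show ?thesis using real by (simp add: ennreal_leI)
next
  case top then show ?thesis by simp
qed

lemma box_aux:
  fixes \<tau> n vb p e xb :: real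
  assumes "\<tau> > 0" "2 \<le> n" "-n \<le> p" "p \<le> 2*n" "-1 \<le> e" "e \<le> 0"
    "\<tau> * (n* vb + p + e) \<le> xb" "xb \<le> \<tau> * (n* vb + p + e + 1)"
  shows "\<tau> * n * (vb - 3/2) \<le> xb \<and> xb \<le> \<tau> * n * (vb + 5/2)"
proof -
  have e1: "n*(vb - 3/2) = n* vb - 3/2*n" "n*(vb + 5/2) = n* vb + 5/2*n" by (simp_all add: algebra_simps)
  have l1: "n*(vb - 3/2) \<le> n* vb + p + e" unfolding e1 using assms by linarith
  have l2: "n* vb + p + e + 1 \<le> n*(vb + 5/2)" unfolding e1 using assms by linarith
  have "\<tau> * (n*(vb - 3/2)) \<le> \<tau> * (n* vb + p + e)" using l1 assms(1) by (intro mult_left_mono) auto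
  moreover have "\<tau> * (n* vb + p + e + 1) \<le> \<tau> * (n*(vb + 5/2))" using l2 assms(1) by (intro mult_left_mono) auto
  ultimately show ?thesis using assms(7,8) by (simp add: mult.assoc)
qed

theorem corollary4p6:
  fixes \<eta> \<epsilon> :: real
  assumes "0 < \<eta>" "\<eta> \<le> 1/3" "0 < \<epsilon>" "\<epsilon> \<le> 1/3"
  shows "\<exists>N::nat. \<forall>m'::nat. \<exists>\<delta>0>0. \<forall>\<delta>. 0 < \<delta> \<and> \<delta> < \<delta>0 \<longrightarrow>
           (\<exists>k::int. \<forall>v::'a::euclidean_space. v \<in> int_lattice \<longrightarrow>
              (\<exists>B. B \<subseteq> dyadic_cube4 (int m') v
                 \<and> (\<exists>F. F \<subseteq> dyadic_cubes k \<and> B = \<Union>F)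
                 \<and> lmeas B \<le> ennreal \<eta> * lmeas (dyadic_cube (int m') v)
                 \<and> (\<forall>A a0. A \<subseteq> cbox 0 ((2 powr (- real m')) *\<^sub>R One)
                        \<and> covering_number \<delta> A \<ge> N \<and> a0 \<in> A \<longrightarrow>
                        lmeas (((+) a0 ` dyadic_cube (int m') v) \<inter> set_plus A B)
                          \<ge> ennreal (1 - \<epsilon>) * lmeas (dyadic_cube (int m') v))))"
proof -
  note eta = assms(1,2) and eps = assms(3,4)
  define d where "d = DIM('a)"
  have d1: "d \<ge> 1" by (simp add: d_def DIM_positive Suc_leI)
  define K :: nat where "K = nat \<lceil>2 * 8^d / \<eta>\<rceil> + 1"
  have K1: "K \<ge> 1" by (simp add: K_def)
  have KK: "2 * 8^d / \<eta> \<le> real K" unfolding K_def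
    by (metis of_nat_1 of_nat_add real_nat_ceiling_ge add_increasing2 zero_le_one order_trans le_add_same_cancel1 of_nat_0_le_iff)
  define r where "r = real (K - 1) / real K"
  have r0: "0 \<le> r" "r < 1" using K1 by (auto simp: r_def)
  define c0 where "c0 = \<epsilon> / (2^(d+3) * exp 1)"
  have c0p: "c0 > 0" using eps by (simp add: c0_def)
  obtain N where N1: "1 \<le> N" and Nr: "(real N * real N + 1) * r ^ N \<le> c0"
  proof (cases "r = 0")
    case True
    then show ?thesis using that[of 1] c0p by simp
  next
    case False
    then have "0 < r" using r0 by simp
    from order_tendstoD(2)[OF lim1[OF this r0(2)] c0p]
    obtain N0 where "\<forall>n\<ge>N0. (real n * real n + 1) * r ^ n < c0" by (auto simp: eventually_sequentially)
    then have "(real (max N0 1) * real (max N0 1) + 1) * r ^ (max N0 1) < c0" by simp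
    then show ?thesis using that[of "max N0 1"] by simp
  qed
  show ?thesis
  proof (intro exI[of _ N] allI)
    fix m' :: nat
    show "\<exists>\<delta>0>0. \<forall>\<delta>. 0 < \<delta> \<and> \<delta> < \<delta>0 \<longrightarrow>
           (\<exists>k::int. \<forall>v::'a. v \<in> int_lattice \<longrightarrow>
              (\<exists>B. B \<subseteq> dyadic_cube4 (int m') v
                 \<and> (\<exists>F. F \<subseteq> dyadic_cubes k \<and> B = \<Union>F)
                 \<and> lmeas B \<le> ennreal \<eta> * lmeas (dyadic_cube (int m') v)
                 \<and> (\<forall>A a0. A \<subseteq> cbox 0 ((2 powr (- real m')) *\<^sub>R One)
                        \<and> covering_number \<delta> A \<ge> N \<and> a0 \<in> A \<longrightarrow>
                        lmeas (((+) a0 ` dyadic_cube (int m') v) \<inter> set_plus A B)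
                          \<ge> ennreal (1 - \<epsilon>) * lmeas (dyadic_cube (int m') v))))"
    proof (intro exI[of _ "1::real"] conjI allI impI)
      fix \<delta> :: real assume \<delta>: "0 < \<delta> \<and> \<delta> < 1"
      show "\<exists>k::int. \<forall>v::'a. v \<in> int_lattice \<longrightarrow>
              (\<exists>B. B \<subseteq> dyadic_cube4 (int m') v
                 \<and> (\<exists>F. F \<subseteq> dyadic_cubes k \<and> B = \<Union>F)
                 \<and> lmeas B \<le> ennreal \<eta> * lmeas (dyadic_cube (int m') v)
                 \<and> (\<forall>A a0. A \<subseteq> cbox 0 ((2 powr (- real m')) *\<^sub>R One)
                        \<and> covering_number \<delta> A \<ge> N \<and> a0 \<in> A \<longrightarrow>
                        lmeas (((+) a0 ` dyadic_cube (int m') v) \<inter> set_plus A B)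
                          \<ge> ennreal (1 - \<epsilon>) * lmeas (dyadic_cube (int m') v)))"
      proof -
      define s where "s = 2 powr (- real m')"
      have sp: "s > 0" by (simp add: s_def)
      define D :: nat where "D = N*N+1"
      have "D > 0" by (simp add: D_def)
      then have Dp: "real D > 0" by simp
      define cc where "cc = \<epsilon> / (4 * real D)"
      have ccp: "cc > 0" using eps Dp by (simp add: cc_def)
      define p where "p = d * (N+1)"
      have "\<forall>\<^sub>F n in sequentially. 4 \<le> real n \<and> s * real d / \<delta> \<le> real n \<and> 2 * real D / \<epsilon> \<le> real n
              \<and> 2 * (real n + 1)^p < 2 powr (cc * real n)"
        by (intro eventually_conj ev_ge lim2 ccp)
      then obtain n0 where n0: "\<And>n. n \<ge> n0 \<Longrightarrow> 4 \<le> real n \<and> s * real d / \<delta> \<le> real n \<and> 2 * real D / \<epsilon> \<le> real n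
              \<and> 2 * (real n + 1)^p < 2 powr (cc * real n)" by (auto simp: eventually_sequentially)
      define j where "j = n0"
      define n :: nat where "n = 2^j"
      have "n0 \<le> n" unfolding n_def j_def by (rule less_imp_le, rule less_exp)
      note nn = n0[OF this]
      have n4: "4 \<le> real n" and nd: "s * real d / \<delta> \<le> real n" and nD: "2 * real D / \<epsilon> \<le> real n"
        and nexp: "2 * (real n + 1)^p < 2 powr (cc * real n)" using nn by auto
      define k :: int where "k = int m' + int j"
      define \<tau> where "\<tau> = 2 powr (- real_of_int k)"
      have tp: "\<tau> > 0" by (simp add: \<tau>_def)
      have tn: "s = \<tau> * real n"
      proof -
        have "real n = 2 powr real j" by (simp add: n_def powr_realpow)
        then have "\<tau> * real n = 2 powr (- real_of_int k + real j)" by (simp add: \<tau>_def flip: powr_add)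
        also have "- real_of_int k + real j = - real m'" by (simp add: k_def)
        finally show ?thesis by (simp add: s_def)
      qed
      have td: "real DIM('a) * \<tau> \<le> \<delta>"
      proof -
        have "s * real d \<le> \<delta> * real n" using nd \<delta> by (simp add: pos_divide_le_eq mult.commute)
        then have "real n * (\<tau> * real d) \<le> real n * \<delta>" unfolding tn by (simp add: mult_ac)
        then have "\<tau> * real d \<le> \<delta>" using n4 by (simp add: mult_le_cancel_left)
        then show ?thesis by (simp add: d_def mult.commute)
      qed
      define Box0 where "Box0 = (lat_box 0 (real n) :: 'a set)"
      define P where "P = (lat_box (- real n) (real (2*n)) :: 'a set)"
      define E where "E = (lat_box (-1) 0 :: 'a set)"
      have natn: "nat (int n + 1) = n + 1" by arith
      have finB: "finite Box0" and cB: "card Box0 \<le> (n+1)^d"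
        using lat_box_card[of 0 "real n", where 'a='a] by (auto simp: Box0_def d_def natn)
      have finP: "finite P" and cP0: "card P \<le> (3*n+1)^d"
      proof -
        have "nat (\<lfloor>real (2*n)\<rfloor> - \<lceil>- real n\<rceil> + 1) = 3*n+1"
        proof -
          have "\<lfloor>real (2*n)\<rfloor> = int (2*n)" by (rule floor_of_nat)
          moreover have "\<lceil>- real n\<rceil> = - int n" by (metis ceiling_minus floor_of_nat)
          ultimately show ?thesis by simp
        qed
        then show "finite P" "card P \<le> (3*n+1)^d"
          using lat_box_card[of "- real n" "real (2*n)", where 'a='a] by (auto simp: P_def d_def)
      qed
      have c1: "nat (1 - \<lceil>- 1::real\<rceil>) = 2"
      proof -
        have "\<lceil>- 1::real\<rceil> = -1" by (metis ceiling_minus floor_one of_int_1)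
        then show ?thesis by simp
      qed
      have finE: "finite E" and cE: "card E \<le> 2^d"
        using lat_box_card[of "-1" 0, where 'a='a] by (auto simp: E_def d_def c1)
      define L where "L = (n+1)^d"
      define Cfg where "Cfg = (\<lambda>(Y,t). (Y, (+) t ` Box0)) ` ({Y. Y \<subseteq> Box0 \<and> card Y = N} \<times> Box0)"
      have finSub: "finite {Y. Y \<subseteq> Box0 \<and> card Y = N}" using finB by simp
      have finC: "finite Cfg" using finSub finB by (simp add: Cfg_def)
      have cCfg: "card Cfg \<le> (n+1)^p"
      proof -
        have "card Cfg \<le> card ({Y. Y \<subseteq> Box0 \<and> card Y = N} \<times> Box0)"
          unfolding Cfg_def by (rule card_image_le) (use finSub finB in simp)
        also have "\<dots> = (card Box0 choose N) * card Box0"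
          using finB by (simp add: card_cartesian_product n_subsets)
        also have "\<dots> \<le> card Box0 ^ N * card Box0"
        proof (cases "N \<le> card Box0")
          case True then show ?thesis by (simp add: binomial_le_pow)
        next
          case False then have "card Box0 choose N = 0" by (simp add: binomial_eq_0)
          then show ?thesis by (simp del: binomial_eq_0_iff)
        qed
        also have "\<dots> = card Box0 ^ (N+1)" by simp
        also have "\<dots> \<le> ((n+1)^d) ^ (N+1)" by (rule power_mono[OF cB]) simp
        also have "\<dots> = (n+1)^p" by (simp add: p_def power_mult[symmetric] power_add[symmetric] algebra_simps)
        finally show ?thesis .
      qed
      define x where "x = \<epsilon> * real n ^ d / real D"
      define a where "a = nat \<lfloor>x\<rfloor>"
      have nnd: "real n \<le> real n ^ d" using n4 d1 by (intro self_le_power) auto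
      have x2: "2 \<le> x"
      proof -
        have "2 * real D \<le> \<epsilon> * real n" using nD eps by (simp add: pos_divide_le_eq mult.commute)
        also have "\<dots> \<le> \<epsilon> * real n ^ d" using nnd eps by simp
        finally show ?thesis using Dp by (simp add: x_def pos_le_divide_eq)
      qed
      have ccx: "cc * real n \<le> x / 4"
      proof -
        have "cc * real n = \<epsilon> * real n / (4 * real D)" by (simp add: cc_def)
        also have "\<dots> \<le> \<epsilon> * real n ^ d / (4 * real D)"
          using nnd eps Dp by (intro divide_right_mono mult_left_mono) auto
        also have "\<dots> = x / 4" by (simp add: x_def)
        finally show ?thesis .
      qed
      have Ly: "real L \<le> 2^d * real n ^ d"
      proof -
        have "real L = (real n + 1)^d" by (simp add: L_def add.commute)
        also have "\<dots> \<le> (2 * real n)^d" using n4 by (intro power_mono) auto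
        also have "\<dots> = 2^d * real n ^ d" by (simp add: power_mult_distrib)
        finally show ?thesis .
      qed
      have Cb: "real (card Cfg) * 2 powr (-(cc * real n)) < 1/2"
      proof -
        have "real (card Cfg) \<le> (real n + 1)^p" using cCfg by (metis of_nat_1 of_nat_add of_nat_le_iff of_nat_power)
        then have "real (card Cfg) * 2 powr (-(cc * real n)) \<le> (real n + 1)^p * 2 powr (-(cc * real n))"
          by (rule mult_right_mono) simp
        also have "\<dots> = (real n + 1)^p / 2 powr (cc * real n)" by (simp add: powr_minus divide_inverse)
        also have "\<dots> < 1/2" using nexp by (simp add: divide_less_eq)
        finally show ?thesis .
      qed
      have num: "real (card Cfg) * real (L choose a) * r^(a*N) < 1/2"
        by (rule numeric[OF r0(1) Nr c0_def eps(1) Ly x_def D_def x2 a_def ccx Cb])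
      have cfg: "finite Y \<and> card Y = N \<and> finite U \<and> card U \<le> L \<and> (\<forall>u\<in>U. \<forall>y\<in>Y. u - y \<in> P)"
        if YU: "(Y,U) \<in> Cfg" for Y U
      proof -
        obtain Yt where Yt: "Yt \<in> {Y. Y \<subseteq> Box0 \<and> card Y = N} \<times> Box0" "(Y,U) = (\<lambda>(Y,t). (Y, (+) t ` Box0)) Yt"
          using YU unfolding Cfg_def by (rule imageE) simp
        obtain t where Y: "Y \<subseteq> Box0" "card Y = N" and t: "t \<in> Box0" and U: "U = (+) t ` Box0"
          using Yt by (cases Yt) auto
        have "finite Y" using Y finB finite_subset by blast
        moreover have "card U \<le> L"
          using card_image_le[OF finB, of "(+) t"] cB U by (simp add: L_def)
        moreover have "u - y \<in> P" if u: "u \<in> U" and y: "y \<in> Y" for u y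
        proof -
          obtain w where w: "w \<in> Box0" "u = t + w" using u U by auto
          have yB: "y \<in> Box0" using y Y by auto
          have "u - y \<in> int_lattice" using w t yB
            by (auto simp: Box0_def lat_box_def intro!: lattice_diff lattice_add)
          moreover have "- real n \<le> (u - y)\<bullet>b \<and> (u - y)\<bullet>b \<le> real (2*n)" if b: "b \<in> Basis" for b
          proof -
            have "0 \<le> w\<bullet>b" "w\<bullet>b \<le> real n" "0 \<le> t\<bullet>b" "t\<bullet>b \<le> real n" "0 \<le> y\<bullet>b" "y\<bullet>b \<le> real n"
              using w t yB b by (auto simp: Box0_def lat_box_def)
            then show ?thesis using w(2) by (simp add: inner_add_left inner_diff_left)
          qed
          ultimately show ?thesis by (simp add: P_def lat_box_def)
        qed
        ultimately show ?thesis using Y U finB by simp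
      qed
      have Pne: "P \<noteq> {}"
      proof -
        have "0 \<in> P" by (simp add: P_def lat_box_def int_lattice_def)
        then show ?thesis by auto
      qed
      obtain S where SP: "S \<subseteq> P" and cS: "real (card S) \<le> 2 * real (card P) / real K"
        and uncS: "\<forall>(Y,U)\<in>Cfg. card {u\<in>U. \<forall>y\<in>Y. u - y \<notin> S} < (N*N+1)*a"
      proof -
        have Kpos: "0 < K" using K1 by simp
        show ?thesis using core[OF finP Pne finC Kpos cfg num[unfolded r_def]] that by blast
      qed
      have finS: "finite S" using SP finP finite_subset by blast
      have sm: "2 powr (- real_of_int (int m')) = s" by (simp add: s_def)
      have tk: "2 powr (- real_of_int k) = \<tau>" by (simp add: \<tau>_def)
      have Dxa: "real D * real a \<le> \<epsilon> * real n ^ d"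
      proof -
        have "real a \<le> x" using x2 by (simp add: a_def)
        then have "real D * real a \<le> real D * x" using Dp by simp
        also have "\<dots> = \<epsilon> * real n ^ d" using Dp by (simp add: x_def)
        finally show ?thesis .
      qed
      show ?thesis
      proof (intro exI[of _ k] allI impI)
        fix v :: 'a assume v: "v \<in> int_lattice"
        define B where "B = \<Union>((\<lambda>(p,e). dyadic_cube k (real n *\<^sub>R v + p + e)) ` (S \<times> E))"
        have nv: "real n *\<^sub>R v \<in> int_lattice" using lattice_scale[OF v, of "int n"] by simp
        show "\<exists>B. B \<subseteq> dyadic_cube4 (int m') v
                 \<and> (\<exists>F. F \<subseteq> dyadic_cubes k \<and> B = \<Union>F)
                 \<and> lmeas B \<le> ennreal \<eta> * lmeas (dyadic_cube (int m') v)
                 \<and> (\<forall>A a0. A \<subseteq> cbox 0 ((2 powr (- real m')) *\<^sub>R One)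
                        \<and> covering_number \<delta> A \<ge> N \<and> a0 \<in> A \<longrightarrow>
                        lmeas (((+) a0 ` dyadic_cube (int m') v) \<inter> set_plus A B)
                          \<ge> ennreal (1 - \<epsilon>) * lmeas (dyadic_cube (int m') v))"
        proof (intro exI[of _ B] conjI allI impI)
          show "B \<subseteq> dyadic_cube4 (int m') v"
          proof
            fix z assume "z \<in> B"
            then obtain q e where qe: "q \<in> S" "e \<in> E" "z \<in> dyadic_cube k (real n *\<^sub>R v + q + e)"
              by (auto simp: B_def)
            have qP: "q \<in> P" using qe SP by auto
            show "z \<in> dyadic_cube4 (int m') v"
              unfolding dyadic_cube4_def sm mem_box
            proof (intro ballI)
              fix b :: 'a assume b: "b \<in> Basis"
              have h1: "- real n \<le> q\<bullet>b" "q\<bullet>b \<le> 2 * real n" using qP b by (auto simp: P_def lat_box_def)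
              have h2: "-1 \<le> e\<bullet>b" "e\<bullet>b \<le> 0" using qe(2) b by (auto simp: E_def lat_box_def)
              have h3: "\<tau> * (real n * (v\<bullet>b) + q\<bullet>b + e\<bullet>b) \<le> z\<bullet>b" "z\<bullet>b \<le> \<tau> * (real n * (v\<bullet>b) + q\<bullet>b + e\<bullet>b + 1)"
                using qe(3) b unfolding dyadic_cube_def tk by (auto simp: mem_box inner_add_left)
              have "\<tau> * real n * (v\<bullet>b - 3/2) \<le> z\<bullet>b \<and> z\<bullet>b \<le> \<tau> * real n * (v\<bullet>b + 5/2)"
                by (rule box_aux[OF tp _ h1 h2 h3]) (use n4 in simp)
              then show "(s *\<^sub>R (v - (3/2) *\<^sub>R One)) \<bullet> b \<le> z \<bullet> b \<and> z \<bullet> b \<le> (s *\<^sub>R (v + (5/2) *\<^sub>R One)) \<bullet> b"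
                using b by (simp add: tn inner_diff_left inner_add_left)
            qed
          qed
          show "\<exists>F. F \<subseteq> dyadic_cubes k \<and> B = \<Union>F"
          proof (intro exI[of _ "(\<lambda>(p,e). dyadic_cube k (real n *\<^sub>R v + p + e)) ` (S \<times> E)"] conjI)
            show "(\<lambda>(p,e). dyadic_cube k (real n *\<^sub>R v + p + e)) ` (S \<times> E) \<subseteq> dyadic_cubes k"
            proof
              fix X assume "X \<in> (\<lambda>(p,e). dyadic_cube k (real n *\<^sub>R v + p + e)) ` (S \<times> E)"
              then obtain q e where qe: "q \<in> S" "e \<in> E" "X = dyadic_cube k (real n *\<^sub>R v + q + e)" by auto
              have "q \<in> int_lattice" "e \<in> int_lattice" using qe SP by (auto simp: P_def E_def lat_box_def)
              then have "real n *\<^sub>R v + q + e \<in> int_lattice" using nv by (intro lattice_add)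
              then show "X \<in> dyadic_cubes k" using qe(3) by (auto simp: dyadic_cubes_def)
            qed
          qed (simp add: B_def)
          have lQ: "lmeas (dyadic_cube (int m') v) = ennreal (s ^ d)"
            using lmeas_dyadic[of "int m'" v] unfolding sm d_def .
          show "lmeas B \<le> ennreal \<eta> * lmeas (dyadic_cube (int m') v)"
          proof -
            define f where "f = (\<lambda>(p,e). dyadic_cube k (real n *\<^sub>R v + p + e))"
            have cube_sets: "dyadic_cube k' w' \<in> sets lebesgue" for k' and w' :: 'a
              by (simp add: dyadic_cube_def)
            have finSE: "finite (S \<times> E)" using finS finE by simp
            have fs: "f i \<in> sets lebesgue" for i by (cases i) (simp add: f_def cube_sets)
            have Beq: "B = (\<Union>i\<in>S \<times> E. f i)" by (simp add: B_def f_def)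
            have Bs: "B \<in> sets lebesgue" unfolding Beq using finSE fs by auto
            have fm: "emeasure lebesgue (f i) = ennreal (\<tau> ^ d)" for i
            proof (cases i)
              case (Pair q e)
              have "emeasure lebesgue (f i) = lmeas (f i)" by (rule outer_measure_of_eq[OF fs, symmetric])
              also have "\<dots> = ennreal (\<tau> ^ d)"
                unfolding Pair f_def using lmeas_dyadic[of k "real n *\<^sub>R v + q + e"] by (simp add: tk d_def)
              finally show ?thesis .
            qed
            have "lmeas B = emeasure lebesgue B" by (rule outer_measure_of_eq[OF Bs])
            also have "\<dots> \<le> (\<Sum>i\<in>S \<times> E. emeasure lebesgue (f i))"
              unfolding Beq by (rule emeasure_subadditive_finite[OF finSE]) (use fs in auto)
            also have "\<dots> = ennreal (real (card (S \<times> E)) * \<tau> ^ d)"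
              using tp by (simp add: fm ennreal_of_nat_eq_real_of_nat ennreal_mult)
            also have "\<dots> \<le> ennreal (\<eta> * s ^ d)"
            proof (rule ennreal_leI)
              have cSE: "real (card (S \<times> E)) = real (card S) * real (card E)" by (simp add: card_cartesian_product)
              have a1: "real (card P) \<le> (4 * real n) ^ d"
              proof -
                have "real (card P) \<le> real ((3*n+1)^d)" using cP0 by (simp only: of_nat_le_iff)
                also have "\<dots> = (3 * real n + 1) ^ d" by (simp add: add.commute)
                also have "\<dots> \<le> (4 * real n) ^ d" using n4 by (intro power_mono) auto
                finally show ?thesis .
              qed
              have a2: "real (card E) \<le> 2 ^ d"
              proof -
                have "real (card E) \<le> real (2^d)" using cE by (simp only: of_nat_le_iff)
                then show ?thesis by simp
              qed
              have Kp: "real K > 0" using K1 by simp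
              have a3: "2 * 8^d \<le> \<eta> * real K" using KK eta by (simp add: pos_divide_le_eq mult.commute)
              have "real (card S) * real (card E) \<le> (2 * (4 * real n) ^ d / real K) * 2 ^ d"
              proof (rule mult_mono)
                show "real (card S) \<le> 2 * (4 * real n) ^ d / real K"
                  using cS a1 Kp by (smt (verit) divide_right_mono)
              qed (use a2 Kp in auto)
              also have "\<dots> = (2 * 8^d) * real n ^ d / real K"
              proof -
                have e8: "(8::real)^d = 4^d * 2^d" by (simp flip: power_mult_distrib)
                show ?thesis by (simp add: power_mult_distrib e8)
              qed
              also have "\<dots> \<le> (\<eta> * real K) * real n ^ d / real K"
                using a3 Kp by (intro divide_right_mono mult_right_mono) auto
              also have "\<dots> = \<eta> * real n ^ d" using Kp by simp
              finally have "real (card S) * real (card E) \<le> \<eta> * real n ^ d" .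
              then have "real (card S) * real (card E) * \<tau> ^ d \<le> \<eta> * real n ^ d * \<tau> ^ d"
                using tp by (intro mult_right_mono) auto
              also have "\<dots> = \<eta> * s ^ d" by (simp add: tn power_mult_distrib mult_ac)
              finally show "real (card (S \<times> E)) * \<tau> ^ d \<le> \<eta> * s ^ d" unfolding cSE .
            qed
            also have "\<dots> = ennreal \<eta> * lmeas (dyadic_cube (int m') v)"
              using eta sp by (simp add: lQ ennreal_mult)
            finally show ?thesis .
          qed
          fix A :: "'a set" and a0 :: 'a
          assume H: "A \<subseteq> cbox 0 ((2 powr (- real m')) *\<^sub>R One) \<and> N \<le> covering_number \<delta> A \<and> a0 \<in> A"
          have unc: "card {u \<in> (+) t ` lat_box 0 (real n). \<forall>y\<in>Y. u - y \<notin> S} \<le> D * a"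
            if "Y \<subseteq> lat_box 0 (real n)" "card Y = N" "t \<in> lat_box 0 (real n)" for Y t
          proof -
            have "(Y, (+) t ` Box0) \<in> Cfg" using that unfolding Cfg_def Box0_def
              by (intro image_eqI[of _ _ "(Y,t)"]) auto
            from bspec[OF uncS this] have "card {u \<in> (+) t ` Box0. \<forall>y\<in>Y. u - y \<notin> S} < (N*N+1)*a" by simp
            then show ?thesis unfolding Box0_def D_def by simp
          qed
          have A': "A \<subseteq> cbox 0 (s *\<^sub>R One)" using H by (simp add: s_def)
          have cv: "ennreal (s ^ DIM('a)) \<le> lmeas ((+) a0 ` dyadic_cube (int m') v \<inter> set_plus A B)
                      + ennreal (real (D*a) * \<tau> ^ DIM('a))"
            by (rule cover[OF tp tn sm tk v td B_def[unfolded E_def] unc A']) (use H in auto)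
          have "real (D*a) * \<tau> ^ d \<le> \<epsilon> * real n ^ d * \<tau> ^ d"
            using Dxa tp by (intro mult_right_mono) auto
          also have "\<dots> = \<epsilon> * s ^ d" by (simp add: tn power_mult_distrib mult_ac)
          finally have ee: "real (D*a) * \<tau> ^ d \<le> \<epsilon> * s ^ d" .
          have "ennreal (s ^ d - real (D*a) * \<tau> ^ d) \<le> lmeas ((+) a0 ` dyadic_cube (int m') v \<inter> set_plus A B)"
            by (rule ennreal_sub_aux) (use cv tp in \<open>auto simp: d_def\<close>)
          moreover have "ennreal (1 - \<epsilon>) * lmeas (dyadic_cube (int m') v) \<le> ennreal (s ^ d - real (D*a) * \<tau> ^ d)"
          proof -
            have "ennreal (1 - \<epsilon>) * lmeas (dyadic_cube (int m') v) = ennreal ((1 - \<epsilon>) * s ^ d)"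
              using eps sp by (simp add: lQ ennreal_mult)
            also have "\<dots> \<le> ennreal (s ^ d - real (D*a) * \<tau> ^ d)"
              using ee by (intro ennreal_leI) (simp add: algebra_simps)
            finally show ?thesis .
          qed
          ultimately show "ennreal (1 - \<epsilon>) * lmeas (dyadic_cube (int m') v)
              \<le> lmeas ((+) a0 ` dyadic_cube (int m') v \<inter> set_plus A B)" by (rule order_trans[rotated])
        qed
      qed
      qed
    qed simp
  qed
qed

end
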